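(* Let $M_P$ be the Pappus configuration on $[9]$ with lines $\{1,2,3\},\{1,6,8\},\{7,8,9\},\{2,6,9\},\{2,4,7\},\{3,5,9\},\{3,4,8\},\{1,5,7\},\{4,5,6\}$. Let $i,j\in[9]$ be two distinct points that do not lie on a common line of $M_P$ (equivalently, $\{i,j\}$ is contained in one of $\{1,4,9\},\{2,5,8\},\{3,6,7\}$), and let $k$ be the third element of that triple. Let $F_{ij}$ be the matroid obtained from $M_P$ by making $i$ and $j$ loops (so its remaining lines are three lines concurrent at $k$, and $k$ is its unique point of degree three), and let $F'_{ij}$ be obtained from $M_P$ by making $i,j,k$ loops. Then \[ V_{\mathcal{C}(F_{ij})}=V_{F_{ij}}\cup V_{F'_{ij}}. \]
   Context: A point-line configuration is a simple matroid of rank $\le3$; its lines are the maximal subsets of size $\ge3$ and rank $2$; the degree of a point is the number of lines containing it. For a matroid $K$ on $[d]$ and $S\subseteq[d]$, the matroid obtained by making the points of $S$ loops has circuits $\mathcal{C}(K\setminus S)\cup\{\{s\}:s\in S\}$, where $K\setminus S$ is the restriction of $K$ to $[d]\setminus S$. For a matroid $K$ on $[d]$ of rank $\le3$: a realization is $\gamma\in(\mathbb{C}^3)^d$ such that for all $S\subseteq[d]$, $(\gamma_s)_{s\in S}$ is linearly dependent iff $S$ is dependent in $K$; $V_K$ is the Zariski closure in $\mathbb{C}^{3d}$ of the realizations; $V_{\mathcal{C}(K)}$ is the set of $\gamma\in(\mathbb{C}^3)^d$ with $(\gamma_s)_{s\in S}$ linearly dependent for every dependent $S$ of $K$. *)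

theory Defs
  imports "HOL-Analysis.Analysis"
begin

text \<open>Point-line configurations are encoded as matroids on the ground set [d] = {1..d}
  (points are natural numbers), given by their set of circuits.\<close>

type_synonym circuits = "nat set set"

definition dependent_in :: "circuits \<Rightarrow> nat set \<Rightarrow> bool" where
  "dependent_in C S \<longleftrightarrow> (\<exists>c\<in>C. c \<subseteq> S)"

text \<open>Circuits of the simple rank-3 matroid on {1..d} whose lines (all of size 3) are given:
  the lines themselves, and the 4-subsets containing no line.\<close>
definition line_circuits :: "nat \<Rightarrow> nat set set \<Rightarrow> circuits" where
  "line_circuits d L = {c. c \<subseteq> {1..d} \<and>
      (c \<in> L \<or> (card c = 4 \<and> \<not> (\<exists>l\<in>L. l \<subseteq> c)))}"

definition pappus_lines :: "nat set set" where
  "pappus_lines = {{1,2,3},{1,6,8},{7,8,9},{2,6,9},{2,4,7},{3,5,9},{3,4,8},{1,5,7},{4,5,6}}"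

definition M_P :: circuits where
  "M_P = line_circuits 9 pappus_lines"

definition make_loops :: "circuits \<Rightarrow> nat set \<Rightarrow> circuits" where
  "make_loops K S = {c \<in> K. c \<inter> S = {}} \<union> {{s} | s. s \<in> S}"

text \<open>Configurations (C^3)^d, encoded as maps nat => complex^3 that vanish outside {1..d}.\<close>
definition cfg_space :: "nat \<Rightarrow> (nat \<Rightarrow> complex^3) set" where
  "cfg_space d = {\<gamma>. \<forall>n. n \<notin> {1..d} \<longrightarrow> \<gamma> n = 0}"

definition lin_dep_family :: "(nat \<Rightarrow> complex^3) \<Rightarrow> nat set \<Rightarrow> bool" where
  "lin_dep_family \<gamma> S \<longleftrightarrow>
     (\<exists>c::nat \<Rightarrow> complex. (\<exists>s\<in>S. c s \<noteq> 0) \<and> (\<Sum>s\<in>S. c s *s \<gamma> s) = 0)"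

inductive_set poly_funs :: "((nat \<Rightarrow> complex^3) \<Rightarrow> complex) set" where
  const: "(\<lambda>_. a) \<in> poly_funs"
| coord: "(\<lambda>\<gamma>. \<gamma> n $ k) \<in> poly_funs"
| add: "p \<in> poly_funs \<Longrightarrow> q \<in> poly_funs \<Longrightarrow> (\<lambda>\<gamma>. p \<gamma> + q \<gamma>) \<in> poly_funs"
| mult: "p \<in> poly_funs \<Longrightarrow> q \<in> poly_funs \<Longrightarrow> (\<lambda>\<gamma>. p \<gamma> * q \<gamma>) \<in> poly_funs"

definition zariski_closure :: "nat \<Rightarrow> (nat \<Rightarrow> complex^3) set \<Rightarrow> (nat \<Rightarrow> complex^3) set" where
  "zariski_closure d A = {\<gamma> \<in> cfg_space d.
      \<forall>p\<in>poly_funs. (\<forall>a\<in>A. p a = 0) \<longrightarrow> p \<gamma> = 0}"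

definition realizations :: "nat \<Rightarrow> circuits \<Rightarrow> (nat \<Rightarrow> complex^3) set" where
  "realizations d K = {\<gamma> \<in> cfg_space d.
      \<forall>S. S \<subseteq> {1..d} \<longrightarrow> (lin_dep_family \<gamma> S \<longleftrightarrow> dependent_in K S)}"

definition V_matroid :: "nat \<Rightarrow> circuits \<Rightarrow> (nat \<Rightarrow> complex^3) set" where
  "V_matroid d K = zariski_closure d (realizations d K)"

definition V_circuit :: "nat \<Rightarrow> circuits \<Rightarrow> (nat \<Rightarrow> complex^3) set" where
  "V_circuit d K = {\<gamma> \<in> cfg_space d.
      \<forall>S. S \<subseteq> {1..d} \<longrightarrow> dependent_in K S \<longrightarrow> lin_dep_family \<gamma> S}"

end

theory Submission
  imports Defs "HOL-Computational_Algebra.Polynomial"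
begin


definition det3 :: "complex^3 \<Rightarrow> complex^3 \<Rightarrow> complex^3 \<Rightarrow> complex" where
 "det3 u v w = u$1*(v$2*w$3 - v$3*w$2) - u$2*(v$1*w$3 - v$3*w$1) + u$3*(v$1*w$2 - v$2*w$1)"

lemma vec3_eq: "(x::complex^3) = y \<longleftrightarrow> x$1 = y$1 \<and> x$2 = y$2 \<and> x$3 = y$3"
  by (simp add: vec_eq_iff forall_3)

lemma lin_dep_fin: "lin_dep_family \<gamma> S \<Longrightarrow> S \<subseteq> S' \<Longrightarrow> finite S' \<Longrightarrow> lin_dep_family \<gamma> S'"
proof -
  assume d: "lin_dep_family \<gamma> S" and sub: "S \<subseteq> S'" and f: "finite S'"
  then obtain c where c1: "\<exists>s\<in>S. c s \<noteq> 0" and c2: "(\<Sum>s\<in>S. c s *s \<gamma> s) = 0"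
    unfolding lin_dep_family_def by blast
  define c' where "c' s = (if s \<in> S then c s else 0)" for s
  have "(\<Sum>s\<in>S'. c' s *s \<gamma> s) = (\<Sum>s\<in>S. c' s *s \<gamma> s)"
    by (rule sum.mono_neutral_right[OF f sub]) (auto simp: c'_def)
  also have "\<dots> = 0" using c2 by (simp add: c'_def)
  finally have eq: "(\<Sum>s\<in>S'. c' s *s \<gamma> s) = 0" .
  from c1 obtain s where s: "s \<in> S" "c s \<noteq> 0" by blast
  show ?thesis unfolding lin_dep_family_def
    by (rule exI[of _ c'], rule conjI[OF bexI[of _ s] eq]) (use s sub in \<open>auto simp: c'_def\<close>)
qed

lemma lin_dep_zero: "s \<in> S \<Longrightarrow> \<gamma> s = 0 \<Longrightarrow> finite S \<Longrightarrow> lin_dep_family \<gamma> S"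
  apply (rule lin_dep_fin[of _ "{s}"])
  unfolding lin_dep_family_def by (auto intro!: exI[of _ "\<lambda>_. 1"])

lemma lin_dep_single: "lin_dep_family \<gamma> {s} \<Longrightarrow> \<gamma> s = 0"
  unfolding lin_dep_family_def by (auto simp: vec_eq_iff)

lemma sum3: "a \<noteq> b \<Longrightarrow> a \<noteq> c \<Longrightarrow> b \<noteq> c \<Longrightarrow>
   (\<Sum>s\<in>{a,b,c}. f s) = f a + f b + (f c :: complex^3)"
  by (simp add: add.assoc)

lemma det3_dep:
  assumes "x *s aa + y *s bb + z *s cc = 0" "x \<noteq> 0 \<or> y \<noteq> 0 \<or> z \<noteq> 0"
  shows "det3 aa bb cc = 0"
proof -
  from assms(1) have e1: "x*aa$1 + y* bb$1 + z*cc$1 = 0" and e2: "x*aa$2 + y* bb$2 + z*cc$2 = 0"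
     and e3: "x*aa$3 + y* bb$3 + z*cc$3 = 0" by (simp_all add: vec3_eq)
  have "x * det3 aa bb cc = 0" using e1 e2 e3 unfolding det3_def by algebra
  moreover have "y * det3 aa bb cc = 0" using e1 e2 e3 unfolding det3_def by algebra
  moreover have "z * det3 aa bb cc = 0" using e1 e2 e3 unfolding det3_def by algebra
  ultimately show ?thesis using assms(2) by auto
qed

lemma det0_dep:
  assumes "det3 aa bb cc = 0"
  shows "\<exists>x y z. (x \<noteq> 0 \<or> y \<noteq> 0 \<or> z \<noteq> 0) \<and> x *s aa + y *s bb + z *s cc = 0"
proof -
  let ?A = "\<lambda>r. bb$2*cc$3 - bb$3*cc$2" 
  define p1 where "p1 = bb$2*cc$3 - bb$3*cc$2"
  define p2 where "p2 = bb$3*cc$1 - bb$1*cc$3"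
  define p3 where "p3 = bb$1*cc$2 - bb$2*cc$1"
  define q1 where "q1 = cc$2*aa$3 - cc$3*aa$2"
  define q2 where "q2 = cc$3*aa$1 - cc$1*aa$3"
  define q3 where "q3 = cc$1*aa$2 - cc$2*aa$1"
  define r1 where "r1 = aa$2* bb$3 - aa$3* bb$2"
  define r2 where "r2 = aa$3* bb$1 - aa$1* bb$3"
  define r3 where "r3 = aa$1* bb$2 - aa$2* bb$1"
  have D: "aa$1*p1 + aa$2*p2 + aa$3*p3 = 0" using assms
    unfolding det3_def p1_def p2_def p3_def by (simp add: algebra_simps)
  show ?thesis
  proof (cases "p1 \<noteq> 0 \<or> q1 \<noteq> 0 \<or> r1 \<noteq> 0")
    case True
    have "p1 *s aa + q1 *s bb + r1 *s cc = 0" using D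
      unfolding vec3_eq p1_def p2_def p3_def q1_def r1_def by (simp; algebra)
    then show ?thesis using True by blast
  next
    case F1: False
    show ?thesis
    proof (cases "p2 \<noteq> 0 \<or> q2 \<noteq> 0 \<or> r2 \<noteq> 0")
      case True
      have "p2 *s aa + q2 *s bb + r2 *s cc = 0" using D
        unfolding vec3_eq p1_def p2_def p3_def q2_def r2_def by (simp; algebra)
      then show ?thesis using True by blast
    next
      case F2: False
      show ?thesis
      proof (cases "p3 \<noteq> 0 \<or> q3 \<noteq> 0 \<or> r3 \<noteq> 0")
        case True
        have "p3 *s aa + q3 *s bb + r3 *s cc = 0" using D
          unfolding vec3_eq p1_def p2_def p3_def q3_def r3_def by (simp; algebra)
        then show ?thesis using True by blast
      next
        case F3: False
        have r: "r1 = 0" "r2 = 0" "r3 = 0" using F1 F2 F3 by auto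
        show ?thesis
        proof (cases "aa = 0")
          case True
          then show ?thesis by (intro exI[of _ 1] exI[of _ 0]) simp
        next
          case False
          then have "aa$1 \<noteq> 0 \<or> aa$2 \<noteq> 0 \<or> aa$3 \<noteq> 0" by (simp add: vec3_eq)
          then show ?thesis
          proof (elim disjE)
            assume h: "aa$1 \<noteq> 0"
            have "bb$1 *s aa + (- aa$1) *s bb + 0 *s cc = 0" using r
              unfolding vec3_eq r1_def r2_def r3_def by (simp; algebra)
            then show ?thesis using h by (metis neg_equal_0_iff_equal)
          next
            assume h: "aa$2 \<noteq> 0"
            have "bb$2 *s aa + (- aa$2) *s bb + 0 *s cc = 0" using r
              unfolding vec3_eq r1_def r2_def r3_def by (simp; algebra)
            then show ?thesis using h by (metis neg_equal_0_iff_equal)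
          next
            assume h: "aa$3 \<noteq> 0"
            have "bb$3 *s aa + (- aa$3) *s bb + 0 *s cc = 0" using r
              unfolding vec3_eq r1_def r2_def r3_def by (simp; algebra)
            then show ?thesis using h by (metis neg_equal_0_iff_equal)
          qed
        qed
      qed
    qed
  qed
qed




lemma lin_dep3:
  assumes "a \<noteq> b" "a \<noteq> c" "b \<noteq> c"
  shows "lin_dep_family \<gamma> {a,b,c} \<longleftrightarrow> det3 (\<gamma> a) (\<gamma> b) (\<gamma> c) = 0"
proof
  assume "lin_dep_family \<gamma> {a,b,c}"
  then obtain f where f1: "\<exists>s\<in>{a,b,c}. f s \<noteq> 0" and f2: "(\<Sum>s\<in>{a,b,c}. f s *s \<gamma> s) = 0"
    unfolding lin_dep_family_def by blast
  from f2 have "f a *s \<gamma> a + f b *s \<gamma> b + f c *s \<gamma> c = 0" using sum3[OF assms] by simp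
  then show "det3 (\<gamma> a) (\<gamma> b) (\<gamma> c) = 0" by (rule det3_dep) (use f1 in auto)
next
  assume "det3 (\<gamma> a) (\<gamma> b) (\<gamma> c) = 0"
  then obtain x y z where h: "x \<noteq> 0 \<or> y \<noteq> 0 \<or> z \<noteq> 0" "x *s \<gamma> a + y *s \<gamma> b + z *s \<gamma> c = 0"
    using det0_dep by blast
  define f where "f s = (if s = a then x else if s = b then y else z)" for s
  have "(\<Sum>s\<in>{a,b,c}. f s *s \<gamma> s) = 0" using h(2) assms by (simp add: sum3 f_def add.assoc)
  moreover have "\<exists>s\<in>{a,b,c}. f s \<noteq> 0" using h(1) assms by (auto simp: f_def)
  ultimately show "lin_dep_family \<gamma> {a,b,c}" unfolding lin_dep_family_def by blast
qed

lemma cramer: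
  fixes aa bb cc dd :: "complex^3"
  shows "det3 aa bb cc *s dd = det3 dd bb cc *s aa + det3 aa dd cc *s bb + det3 aa bb dd *s cc"
  unfolding vec3_eq det3_def by (simp; algebra)

lemma lin_dep4:
  assumes "finite S" "4 \<le> card S"
  shows "lin_dep_family \<gamma> S"
proof -
  obtain xs where xs: "set xs = S" "distinct xs" using finite_distinct_list[OF assms(1)] by blast
  have len: "4 \<le> length xs" using xs assms(2) distinct_card by fastforce
  define a b c d where "a = xs!0" "b = xs!1" "c = xs!2" "d = xs!3"
  have i: "xs!i \<in> S" if "i < 4" for i
  proof -
    have "i < length xs" using len that by simp
    then show ?thesis using xs(1) nth_mem by blast
  qed
  have dd: "xs!i \<noteq> xs!j" if "i < 4" "j < 4" "i \<noteq> j" for i j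
  proof -
    have "i < length xs" "j < length xs" using len that by simp_all
    then show ?thesis using nth_eq_iff_index_eq[OF xs(2)] that by blast
  qed
  have in4: "{a,b,c,d} \<subseteq> S" using i[of 0] i[of 1] i[of 2] i[of 3]
    unfolding a_b_c_d_def by auto
  have dist: "a \<noteq> b" "a \<noteq> c" "a \<noteq> d" "b \<noteq> c" "b \<noteq> d" "c \<noteq> d"
    using dd[of 0 1] dd[of 0 2] dd[of 0 3] dd[of 1 2] dd[of 1 3] dd[of 2 3]
    unfolding a_b_c_d_def by auto
  show ?thesis
  proof (cases "det3 (\<gamma> a) (\<gamma> b) (\<gamma> c) = 0")
    case True
    then have "lin_dep_family \<gamma> {a,b,c}" using lin_dep3 dist by blast
    then show ?thesis by (rule lin_dep_fin) (use in4 assms in auto)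
  next
    case False
    define f where "f s = (if s = a then det3 (\<gamma> d) (\<gamma> b) (\<gamma> c) else if s = b then det3 (\<gamma> a) (\<gamma> d) (\<gamma> c)
       else if s = c then det3 (\<gamma> a) (\<gamma> b) (\<gamma> d) else - det3 (\<gamma> a) (\<gamma> b) (\<gamma> c))" for s
    have "(\<Sum>s\<in>{a,b,c,d}. f s *s \<gamma> s) = f a *s \<gamma> a + f b *s \<gamma> b + f c *s \<gamma> c + f d *s \<gamma> d"
      using dist by (simp add: add.assoc)
    also have "\<dots> = 0" using dist cramer[of "\<gamma> a" "\<gamma> b" "\<gamma> c" "\<gamma> d"]
      by (simp add: f_def)
    finally have "lin_dep_family \<gamma> {a,b,c,d}" unfolding lin_dep_family_def using False dist
      by (intro exI[of _ f] conjI bexI[of _ d]) (auto simp: f_def)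
    then show ?thesis by (rule lin_dep_fin) (use in4 assms in auto)
  qed
qed

lemma poly_sub: "p \<in> poly_funs \<Longrightarrow> q \<in> poly_funs \<Longrightarrow> (\<lambda>\<gamma>. p \<gamma> - q \<gamma>) \<in> poly_funs"
proof -
  assume "p \<in> poly_funs" "q \<in> poly_funs"
  then have "(\<lambda>\<gamma>. p \<gamma> + (\<lambda>_. -1) \<gamma> * q \<gamma>) \<in> poly_funs"
    by (intro poly_funs.add poly_funs.mult poly_funs.const)
  then show ?thesis by simp
qed

lemma poly_det: "(\<lambda>\<gamma>. det3 (\<gamma> a) (\<gamma> b) (\<gamma> c)) \<in> poly_funs"
  unfolding det3_def by (intro poly_sub poly_funs.add poly_funs.mult poly_funs.coord)

definition pc :: "(complex \<Rightarrow> complex) \<Rightarrow> bool" where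
  "pc f \<longleftrightarrow> (\<exists>Q. \<forall>t. f t = poly Q t)"

lemma pc_const: "pc (\<lambda>t. a)" unfolding pc_def by (rule exI[of _ "[:a:]"]) simp
lemma pc_id: "pc (\<lambda>t. t)" unfolding pc_def by (rule exI[of _ "[:0,1:]"]) simp
lemma pc_add: "pc f \<Longrightarrow> pc g \<Longrightarrow> pc (\<lambda>t. f t + g t)"
  unfolding pc_def by (metis poly_add)
lemma pc_mult: "pc f \<Longrightarrow> pc g \<Longrightarrow> pc (\<lambda>t. f t * g t)"
  unfolding pc_def by (metis poly_mult)
lemma pc_sub: "pc f \<Longrightarrow> pc g \<Longrightarrow> pc (\<lambda>t. f t - g t)"
  unfolding pc_def by (metis poly_diff)

lemma poly_funs_pc:
  assumes "p \<in> poly_funs" "\<forall>n r. pc (\<lambda>t. g t n $ r)"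
  shows "pc (\<lambda>t. p (g t))"
  using assms(1) by induction (use assms(2) in \<open>auto intro: pc_const pc_add pc_mult\<close>)

lemma closure_by_curve:
  assumes pcg: "\<forall>n r. pc (\<lambda>t. g t n $ r)" and g0: "g 0 = \<gamma>" and cf: "\<gamma> \<in> cfg_space d"
    and fin: "finite {t. g t \<notin> A}"
  shows "\<gamma> \<in> zariski_closure d A"
  unfolding zariski_closure_def
proof (intro CollectI conjI ballI impI cf)
  fix p assume p: "p \<in> poly_funs" and van: "\<forall>a\<in>A. p a = 0"
  obtain Q where Q: "\<And>t. p (g t) = poly Q t" using poly_funs_pc[OF p pcg] unfolding pc_def by blast
  have "Q = 0"
  proof (rule ccontr)
    assume "Q \<noteq> 0"
    then have "finite {t. poly Q t = 0}" by (rule poly_roots_finite)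
    moreover have "{t. g t \<in> A} \<subseteq> {t. poly Q t = 0}" using van Q by auto
    ultimately have "finite ({t. g t \<notin> A} \<union> {t. g t \<in> A})" using fin finite_subset by blast
    moreover have "{t. g t \<notin> A} \<union> {t. g t \<in> A} = UNIV" by auto
    ultimately show False using infinite_UNIV_char_0 by metis
  qed
  then show "p \<gamma> = 0" using Q[of 0] g0 by simp
qed




definition Ls :: "nat set \<Rightarrow> nat set set" where
  "Ls L = {l \<in> pappus_lines. l \<inter> L = {}}"

lemma pappus_sub: "l \<in> pappus_lines \<Longrightarrow> l \<subseteq> {1..9}"
  unfolding pappus_lines_def by auto

lemma pappus_card: "l \<in> pappus_lines \<Longrightarrow> card l = 3"
  unfolding pappus_lines_def by auto

lemma pappus_form: "l \<in> pappus_lines \<Longrightarrow> \<exists>a b c. l = {a,b,c} \<and> a \<noteq> b \<and> a \<noteq> c \<and> b \<noteq> c"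
  using pappus_card[of l] unfolding card_3_iff by blast

lemma dep_desc:
  assumes "S \<subseteq> {1..9}"
  shows "dependent_in (make_loops M_P L) S \<longleftrightarrow> (S \<inter> L \<noteq> {} \<or> (\<exists>l\<in>Ls L. l \<subseteq> S) \<or> 4 \<le> card S)"
proof
  have fS: "finite S" using assms finite_subset by blast
  assume "dependent_in (make_loops M_P L) S"
  then obtain c where c: "c \<in> make_loops M_P L" "c \<subseteq> S" unfolding dependent_in_def by blast
  show "S \<inter> L \<noteq> {} \<or> (\<exists>l\<in>Ls L. l \<subseteq> S) \<or> 4 \<le> card S"
  proof (cases "c \<in> M_P \<and> c \<inter> L = {}")
    case True
    then have "c \<in> pappus_lines \<or> card c = 4" unfolding M_P_def line_circuits_def by auto
    then show ?thesis
    proof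
      assume "c \<in> pappus_lines" then show ?thesis using True c(2) unfolding Ls_def by blast
    next
      assume "card c = 4" then show ?thesis using card_mono[OF fS c(2)] by simp
    qed
  next
    case False
    then obtain s where "c = {s}" "s \<in> L" using c(1) unfolding make_loops_def by auto
    then show ?thesis using c(2) by auto
  qed
next
  have fS: "finite S" using assms finite_subset by blast
  assume h: "S \<inter> L \<noteq> {} \<or> (\<exists>l\<in>Ls L. l \<subseteq> S) \<or> 4 \<le> card S"
  show "dependent_in (make_loops M_P L) S"
  proof (cases "S \<inter> L \<noteq> {}")
    case True
    then obtain s where "s \<in> S" "s \<in> L" by blast
    then show ?thesis unfolding dependent_in_def make_loops_def by auto
  next
    case SL: False
    show ?thesis
    proof (cases "\<exists>l\<in>Ls L. l \<subseteq> S")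
      case True
      then obtain l where l: "l \<in> pappus_lines" "l \<inter> L = {}" "l \<subseteq> S" unfolding Ls_def by blast
      then have "l \<in> M_P" using pappus_sub unfolding M_P_def line_circuits_def by auto
      then show ?thesis using l unfolding dependent_in_def make_loops_def by auto
    next
      case False
      then have "4 \<le> card S" using h SL by blast
      then obtain T where T: "T \<subseteq> S" "card T = 4" using obtain_subset_with_card_n by metis
      show ?thesis
      proof (cases "\<exists>l\<in>pappus_lines. l \<subseteq> T")
        case True
        then obtain l where l: "l \<in> pappus_lines" "l \<subseteq> T" by blast
        then have "l \<in> M_P" using pappus_sub unfolding M_P_def line_circuits_def by auto
        moreover have "l \<inter> L = {}" using l T SL by blast
        ultimately show ?thesis using l T unfolding dependent_in_def make_loops_def by auto
      next
        case False
        then have "T \<in> M_P" using T assms unfolding M_P_def line_circuits_def by auto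
        moreover have "T \<inter> L = {}" using T SL by blast
        ultimately show ?thesis using T unfolding dependent_in_def make_loops_def by auto
      qed
    qed
  qed
qed

lemma real_suff:
  assumes cf: "\<gamma> \<in> cfg_space 9" and lz: "\<forall>l\<in>L. \<gamma> l = 0" and ll: "\<forall>l\<in>Ls L. lin_dep_family \<gamma> l"
    and nd: "\<forall>S. S \<subseteq> {1..9} - L \<longrightarrow> S \<noteq> {} \<longrightarrow> card S \<le> 3 \<longrightarrow> S \<notin> Ls L \<longrightarrow> \<not> lin_dep_family \<gamma> S"
  shows "\<gamma> \<in> realizations 9 (make_loops M_P L)"
  unfolding realizations_def
proof (intro CollectI conjI allI impI cf)
  fix S :: "nat set" assume S: "S \<subseteq> {1..9}"
  have fS: "finite S" using S finite_subset by blast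
  show "lin_dep_family \<gamma> S = dependent_in (make_loops M_P L) S"
    unfolding dep_desc[OF S]
  proof (cases "S \<inter> L \<noteq> {}")
    case True
    then obtain s where s: "s \<in> S" "s \<in> L" by blast
    have "lin_dep_family \<gamma> S" using lin_dep_zero[OF s(1) _ fS] lz s(2) by simp
    then show "lin_dep_family \<gamma> S = (S \<inter> L \<noteq> {} \<or> (\<exists>l\<in>Ls L. l \<subseteq> S) \<or> 4 \<le> card S)"
      using True by simp
  next
    case SL: False
    show "lin_dep_family \<gamma> S = (S \<inter> L \<noteq> {} \<or> (\<exists>l\<in>Ls L. l \<subseteq> S) \<or> 4 \<le> card S)"
    proof (cases "\<exists>l\<in>Ls L. l \<subseteq> S")
      case True
      then obtain l where l: "l \<in> Ls L" "l \<subseteq> S" by blast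
      have "lin_dep_family \<gamma> S" using lin_dep_fin[OF _ l(2) fS] ll l(1) by simp
      then show ?thesis using True by simp
    next
      case F2: False
      show ?thesis
      proof (cases "4 \<le> card S")
        case True
        then show ?thesis using lin_dep4[OF fS True] by simp
      next
        case False
        have "\<not> lin_dep_family \<gamma> S"
        proof (cases "S = {}")
          case True
          then show ?thesis unfolding lin_dep_family_def by simp
        next
          case ne: False
          have "S \<notin> Ls L" using F2 by blast
          moreover have "S \<subseteq> {1..9} - L" using S SL by blast
          ultimately show ?thesis using nd ne False by simp
        qed
        then show ?thesis using SL F2 False by simp
      qed
    qed
  qed
qed

lemma real_nec:
  assumes r: "\<gamma> \<in> realizations 9 (make_loops M_P L)" and L: "L \<subseteq> {1..9}"
  shows "\<forall>l\<in>L. \<gamma> l = 0" "\<forall>l\<in>Ls L. lin_dep_family \<gamma> l"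
    "\<And>T. T \<subseteq> {1..9} - L \<Longrightarrow> card T = 3 \<Longrightarrow> T \<notin> Ls L \<Longrightarrow> \<not> lin_dep_family \<gamma> T"
proof -
  have R: "\<And>S. S \<subseteq> {1..9} \<Longrightarrow> lin_dep_family \<gamma> S \<longleftrightarrow> (S \<inter> L \<noteq> {} \<or> (\<exists>l\<in>Ls L. l \<subseteq> S) \<or> 4 \<le> card S)"
  proof -
    fix S :: "nat set" assume S: "S \<subseteq> {1..9}"
    have "lin_dep_family \<gamma> S \<longleftrightarrow> dependent_in (make_loops M_P L) S"
      using r S unfolding realizations_def by blast
    then show "?thesis S" using dep_desc[OF S] by simp
  qed
  show "\<forall>l\<in>L. \<gamma> l = 0"
  proof
    fix l assume "l \<in> L"
    then have "lin_dep_family \<gamma> {l}" using R[of "{l}"] L by auto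
    then show "\<gamma> l = 0" by (rule lin_dep_single)
  qed
  show "\<forall>l\<in>Ls L. lin_dep_family \<gamma> l"
  proof
    fix l assume l: "l \<in> Ls L"
    then have "l \<subseteq> {1..9}" using pappus_sub unfolding Ls_def by auto
    then show "lin_dep_family \<gamma> l" using R l by blast
  qed
  fix T assume T: "T \<subseteq> {1..9} - L" "card T = 3" "T \<notin> Ls L"
  have fT: "finite T" using T(2) card.infinite by fastforce
  have "\<not> (\<exists>l\<in>Ls L. l \<subseteq> T)"
  proof
    assume "\<exists>l\<in>Ls L. l \<subseteq> T"
    then obtain l where l: "l \<in> Ls L" "l \<subseteq> T" by blast
    have "card l = 3" using l pappus_card unfolding Ls_def by auto
    then have "l = T" using card_subset_eq[OF fT l(2)] T(2) by simp
    then show False using l T by simp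
  qed
  then show "\<not> lin_dep_family \<gamma> T" using R[of T] T by auto
qed

lemma ext_pair:
  assumes fN: "finite N" and cN: "6 \<le> card N" and cL: "card LL \<le> 3" and fL: "finite LL"
    and ab: "a \<in> N" "b \<in> N" "a \<noteq> b"
  shows "\<exists>c\<in>N. c \<notin> {a,b} \<and> {a,b,c} \<notin> LL"
proof (rule ccontr)
  assume "\<not> ?thesis"
  then have sub: "(\<lambda>c. {a,b,c}) ` (N - {a,b}) \<subseteq> LL" by auto
  have inj: "inj_on (\<lambda>c. {a,b,c}) (N - {a,b})" by (rule inj_onI) (auto simp: insert_eq_iff)
  have c2: "card (N - {a,b}) = card N - 2" using ab fN by (simp add: card_Diff_subset)
  have "card (N - {a,b}) \<le> card LL" by (rule card_inj_on_le[OF inj sub fL])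
  then show False using c2 cN cL by linarith
qed

lemma ext_triple:
  assumes fN: "finite N" and cN: "6 \<le> card N" and cL: "card LL \<le> 3" and fL: "finite LL"
    and c3: "\<forall>l\<in>LL. card l = 3"
    and S: "S \<subseteq> N" "S \<noteq> {}" "card S \<le> 3" "S \<notin> LL"
  shows "\<exists>T. S \<subseteq> T \<and> T \<subseteq> N \<and> card T = 3 \<and> T \<notin> LL"
proof -
  have fS: "finite S" using S fN finite_subset by blast
  have pair: "\<exists>T. {a,b} \<subseteq> T \<and> T \<subseteq> N \<and> card T = 3 \<and> T \<notin> LL" if ab: "a \<in> N" "b \<in> N" "a \<noteq> b" for a b
  proof -
    obtain c where "c \<in> N" "c \<notin> {a,b}" "{a,b,c} \<notin> LL" using ext_pair[OF fN cN cL fL ab] by blast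
    then show ?thesis using ab by (intro exI[of _ "{a,b,c}"]) auto
  qed
  have "card S = 1 \<or> card S = 2 \<or> card S = 3" using S(2,3) fS by (cases "card S") auto
  then show ?thesis
  proof (elim disjE)
    assume "card S = 1"
    then obtain a where a: "S = {a}" by (rule card_1_singletonE)
    have "N - {a} \<noteq> {}"
    proof
      assume "N - {a} = {}"
      then have "N \<subseteq> {a}" by blast
      then have "card N \<le> 1" using card_mono[of "{a}" N] by simp
      then show False using cN by simp
    qed
    then obtain b where "b \<in> N" "b \<noteq> a" by blast
    then show ?thesis using pair[of a b] a S(1) by blast
  next
    assume "card S = 2"
    then obtain a b where "S = {a,b}" "a \<noteq> b" by (auto simp: card_2_iff)
    then show ?thesis using pair[of a b] S(1) by blast
  next
    assume "card S = 3" then show ?thesis using S by blast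
  qed
qed




lemma finite_Ls: "finite (Ls L)"
proof -
  have "finite pappus_lines" unfolding pappus_lines_def by simp
  then show ?thesis unfolding Ls_def by simp
qed

lemma Ls_card3: "\<forall>l\<in>Ls L. card l = 3" using pappus_card unfolding Ls_def by auto

lemma nondeg_from_triples:
  assumes cN: "6 \<le> card ({1..9} - L)" and cL: "card (Ls L) \<le> 3"
    and tri: "\<And>T. T \<subseteq> {1..9} - L \<Longrightarrow> card T = 3 \<Longrightarrow> T \<notin> Ls L \<Longrightarrow> \<not> lin_dep_family \<gamma> T"
    and S: "S \<subseteq> {1..9} - L" "S \<noteq> {}" "card S \<le> 3" "S \<notin> Ls L"
  shows "\<not> lin_dep_family \<gamma> S"
proof
  assume d: "lin_dep_family \<gamma> S"
  obtain T where T: "S \<subseteq> T" "T \<subseteq> {1..9} - L" "card T = 3" "T \<notin> Ls L"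
    using ext_triple[OF _ cN cL finite_Ls Ls_card3 S] by blast
  have "finite T" using T(3) card.infinite by fastforce
  then have "lin_dep_family \<gamma> T" using lin_dep_fin[OF d T(1)] by simp
  then show False using tri T(2-4) by blast
qed

lemma real_from_triples:
  assumes cN: "6 \<le> card ({1..9} - L)" and cL: "card (Ls L) \<le> 3"
    and cf: "\<gamma> \<in> cfg_space 9" and lz: "\<forall>l\<in>L. \<gamma> l = 0" and ll: "\<forall>l\<in>Ls L. lin_dep_family \<gamma> l"
    and tri: "\<And>x y z. x \<in> {1..9} - L \<Longrightarrow> y \<in> {1..9} - L \<Longrightarrow> z \<in> {1..9} - L \<Longrightarrow>
         x \<noteq> y \<Longrightarrow> x \<noteq> z \<Longrightarrow> y \<noteq> z \<Longrightarrow> {x,y,z} \<notin> Ls L \<Longrightarrow> det3 (\<gamma> x) (\<gamma> y) (\<gamma> z) \<noteq> 0"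
  shows "\<gamma> \<in> realizations 9 (make_loops M_P L)"
proof (rule real_suff[OF cf lz ll], intro allI impI)
  fix S assume S: "S \<subseteq> {1..9} - L" "S \<noteq> {}" "card S \<le> 3" "S \<notin> Ls L"
  show "\<not> lin_dep_family \<gamma> S"
  proof (rule nondeg_from_triples[OF cN cL _ S])
    fix T assume T: "T \<subseteq> {1..9} - L" "card T = 3" "T \<notin> Ls L"
    then obtain x y z where xyz: "T = {x,y,z}" "x \<noteq> y" "y \<noteq> z" "x \<noteq> z" unfolding card_3_iff by blast
    have "det3 (\<gamma> x) (\<gamma> y) (\<gamma> z) \<noteq> 0" using tri T xyz by auto
    then show "\<not> lin_dep_family \<gamma> T" using lin_dep3[of x y z \<gamma>] xyz by simp
  qed
qed

lemma density:
  assumes L: "L \<subseteq> {1..9}" and cN: "6 \<le> card ({1..9} - L)" and cL: "card (Ls L) \<le> 3"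
    and pcg: "\<forall>n r. pc (\<lambda>t. g t n $ r)" and g0: "g 0 = \<gamma>"
    and g1: "g 1 \<in> realizations 9 (make_loops M_P L)"
    and gc: "\<And>t. g t \<in> cfg_space 9" and gz: "\<And>t. \<forall>l\<in>L. g t l = 0"
    and gl: "\<And>t. \<forall>l\<in>Ls L. lin_dep_family (g t) l"
  shows "\<gamma> \<in> V_matroid 9 (make_loops M_P L)"
  unfolding V_matroid_def
proof (rule closure_by_curve[OF pcg g0])
  show "\<gamma> \<in> cfg_space 9" using gc[of 0] g0 by simp
  define N where "N = {1..9} - L"
  have ev: "eventually (\<lambda>t. \<not> lin_dep_family (g t) T) cofinite"
    if T: "T \<subseteq> N" "card T = 3" "T \<notin> Ls L" for T
  proof -
    obtain x y z where xyz: "T = {x,y,z}" "x \<noteq> y" "y \<noteq> z" "x \<noteq> z" using T(2) unfolding card_3_iff by blast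
    have "\<not> lin_dep_family (g 1) T" using real_nec(3)[OF g1 L, of T] T unfolding N_def by simp
    then have d1: "det3 (g 1 x) (g 1 y) (g 1 z) \<noteq> 0" using lin_dep3[of x y z "g 1"] xyz by simp
    obtain Q where Q: "\<And>t. det3 (g t x) (g t y) (g t z) = poly Q t"
      using poly_funs_pc[OF poly_det pcg, of x y z] unfolding pc_def by blast
    have "Q \<noteq> 0" using d1 Q[of 1] by auto
    then have "finite {t. poly Q t = 0}" by (rule poly_roots_finite)
    then have "eventually (\<lambda>t. poly Q t \<noteq> 0) cofinite" unfolding eventually_cofinite by simp
    then show ?thesis
    proof (rule eventually_mono)
      fix t assume "poly Q t \<noteq> 0"
      then show "\<not> lin_dep_family (g t) T" using Q[of t] lin_dep3[of x y z "g t"] xyz by simp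
    qed
  qed
  have "eventually (\<lambda>t. \<forall>S\<in>{S. S \<subseteq> N}. S \<noteq> {} \<longrightarrow> card S \<le> 3 \<longrightarrow> S \<notin> Ls L \<longrightarrow> \<not> lin_dep_family (g t) S) cofinite"
  proof (rule eventually_ball_finite[OF _ ballI])
    show "finite {S. S \<subseteq> N}" unfolding N_def by simp
    fix S assume S: "S \<in> {S. S \<subseteq> N}"
    show "eventually (\<lambda>t. S \<noteq> {} \<longrightarrow> card S \<le> 3 \<longrightarrow> S \<notin> Ls L \<longrightarrow> \<not> lin_dep_family (g t) S) cofinite"
    proof (cases "S \<noteq> {} \<and> card S \<le> 3 \<and> S \<notin> Ls L")
      case True
      have fN: "finite ({1..9::nat} - L)" by simp
      have SN: "S \<subseteq> {1..9} - L" using S unfolding N_def by simp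
      obtain T where T: "S \<subseteq> T" "T \<subseteq> N" "card T = 3" "T \<notin> Ls L"
        using ext_triple[OF fN cN cL finite_Ls Ls_card3 SN] True unfolding N_def by blast
      have fT: "finite T" using T(3) card.infinite by fastforce
      show ?thesis using ev[OF T(2-4)]
      proof (rule eventually_mono)
        fix t assume "\<not> lin_dep_family (g t) T"
        then show "S \<noteq> {} \<longrightarrow> card S \<le> 3 \<longrightarrow> S \<notin> Ls L \<longrightarrow> \<not> lin_dep_family (g t) S"
          using lin_dep_fin[of "g t" S T, OF _ T(1) fT] by blast
      qed
    next
      case False
      then show ?thesis by auto
    qed
  qed
  then have "eventually (\<lambda>t. g t \<in> realizations 9 (make_loops M_P L)) cofinite"
  proof (rule eventually_mono)
    fix t assume h: "\<forall>S\<in>{S. S \<subseteq> N}. S \<noteq> {} \<longrightarrow> card S \<le> 3 \<longrightarrow> S \<notin> Ls L \<longrightarrow> \<not> lin_dep_family (g t) S"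
    show "g t \<in> realizations 9 (make_loops M_P L)"
      by (rule real_suff[OF gc gz gl]) (use h in \<open>auto simp: N_def\<close>)
  qed
  then show "finite {t. g t \<notin> realizations 9 (make_loops M_P L)}" unfolding eventually_cofinite .
qed

lemma Vsub:
  assumes LL: "L \<subseteq> L'" "L' \<subseteq> {1..9}"
  shows "V_matroid 9 (make_loops M_P L') \<subseteq> V_circuit 9 (make_loops M_P L)"
proof
  fix \<gamma> assume g: "\<gamma> \<in> V_matroid 9 (make_loops M_P L')"
  have cf: "\<gamma> \<in> cfg_space 9" using g unfolding V_matroid_def zariski_closure_def by blast
  have van: "\<And>p. p \<in> poly_funs \<Longrightarrow> (\<forall>a\<in>realizations 9 (make_loops M_P L'). p a = 0) \<Longrightarrow> p \<gamma> = 0"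
    using g unfolding V_matroid_def zariski_closure_def by blast
  have z: "\<gamma> l = 0" if l: "l \<in> L'" for l
  proof -
    have "\<gamma> l $ r = 0" for r
    proof -
      have "\<forall>a\<in>realizations 9 (make_loops M_P L'). a l $ r = 0"
      proof
        fix a assume "a \<in> realizations 9 (make_loops M_P L')"
        then have "a l = 0" using real_nec(1)[OF _ LL(2)] l by blast
        then show "a l $ r = 0" by simp
      qed
      then show "\<gamma> l $ r = 0" by (rule van[OF poly_funs.coord])
    qed
    then show ?thesis by (simp add: vec_eq_iff)
  qed
  have dl: "lin_dep_family \<gamma> l" if l: "l \<in> Ls L'" for l
  proof -
    have "l \<in> pappus_lines" using l unfolding Ls_def by simp
    then obtain a b c where abc: "l = {a,b,c}" "a \<noteq> b" "a \<noteq> c" "b \<noteq> c"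
      using pappus_form by blast
    have "det3 (\<gamma> a) (\<gamma> b) (\<gamma> c) = 0"
    proof (rule van[OF poly_det], intro ballI)
      fix \<rho> assume "\<rho> \<in> realizations 9 (make_loops M_P L')"
      then have "lin_dep_family \<rho> l" using real_nec(2)[OF _ LL(2)] l by blast
      then show "det3 (\<rho> a) (\<rho> b) (\<rho> c) = 0" using lin_dep3[OF abc(2-4)] abc(1) by simp
    qed
    then show ?thesis using lin_dep3[OF abc(2-4)] abc(1) by simp
  qed
  show "\<gamma> \<in> V_circuit 9 (make_loops M_P L)"
    unfolding V_circuit_def
  proof (intro CollectI conjI allI impI cf)
    fix S :: "nat set" assume S: "S \<subseteq> {1..9}" and dep: "dependent_in (make_loops M_P L) S"
    have fS: "finite S" using S finite_subset by blast
    have "S \<inter> L \<noteq> {} \<or> (\<exists>l\<in>Ls L. l \<subseteq> S) \<or> 4 \<le> card S" using dep dep_desc[OF S] by simp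
    then show "lin_dep_family \<gamma> S"
    proof (elim disjE)
      assume "S \<inter> L \<noteq> {}"
      then obtain s where s: "s \<in> S" "s \<in> L'" using LL by blast
      show ?thesis by (rule lin_dep_zero[of s S \<gamma>, OF s(1) z[OF s(2)] fS])
    next
      assume "\<exists>l\<in>Ls L. l \<subseteq> S"
      then obtain l where l: "l \<in> Ls L" "l \<subseteq> S" by blast
      show ?thesis
      proof (cases "l \<inter> L' = {}")
        case True
        then have "l \<in> Ls L'" using l unfolding Ls_def by blast
        then show ?thesis by (rule lin_dep_fin[OF dl _ fS]) (rule l(2))
      next
        case False
        then obtain s where s: "s \<in> S" "s \<in> L'" using l by blast
        show ?thesis by (rule lin_dep_zero[of s S \<gamma>, OF s(1) z[OF s(2)] fS])
      qed
    next
      assume "4 \<le> card S" then show ?thesis by (rule lin_dep4[OF fS])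
    qed
  qed
qed




definition pcv :: "(complex \<Rightarrow> complex^3) \<Rightarrow> bool" where
  "pcv F \<longleftrightarrow> (\<forall>r. pc (\<lambda>t. F t $ r))"

lemma pcv_const: "pcv (\<lambda>t. v)" unfolding pcv_def by (simp add: pc_const)
lemma pcv_add: "pcv F \<Longrightarrow> pcv G \<Longrightarrow> pcv (\<lambda>t. F t + G t)"
  unfolding pcv_def by (simp add: pc_add)
lemma pcv_smult: "pc f \<Longrightarrow> pcv F \<Longrightarrow> pcv (\<lambda>t. f t *s F t)"
  unfolding pcv_def by (simp add: pc_mult)
lemma pcv_if: "pcv F \<Longrightarrow> pcv G \<Longrightarrow> pcv (\<lambda>t. if P then F t else G t)"
  unfolding pcv_def by (cases P) simp_all

lemma Fprime:
  assumes L: "L \<subseteq> {1..9}" and cN: "6 \<le> card ({1..9} - L)" and LsL: "Ls L = {}"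
    and rho: "\<rho> \<in> realizations 9 (make_loops M_P L)"
    and cf: "\<gamma> \<in> cfg_space 9" and gz: "\<forall>l\<in>L. \<gamma> l = 0"
  shows "\<gamma> \<in> V_matroid 9 (make_loops M_P L)"
proof -
  define g where "g t n = (1 - t) *s \<gamma> n + t *s \<rho> n" for t n
  have rc: "\<rho> \<in> cfg_space 9" using rho unfolding realizations_def by blast
  have rz: "\<forall>l\<in>L. \<rho> l = 0" using real_nec(1)[OF rho L] .
  show ?thesis
  proof (rule density[OF L cN _ _ _ _ _ _ _, of g])
    show "card (Ls L) \<le> 3" using LsL by simp
    show "\<forall>n r. pc (\<lambda>t. g t n $ r)"
    proof (intro allI)
      fix n r
      have "pcv (\<lambda>t. g t n)" unfolding g_def
        by (intro pcv_add pcv_smult pcv_const pc_sub pc_const pc_id)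
      then show "pc (\<lambda>t. g t n $ r)" unfolding pcv_def by blast
    qed
    show "g 0 = \<gamma>" unfolding g_def by (simp add: fun_eq_iff)
    show "g 1 \<in> realizations 9 (make_loops M_P L)" unfolding g_def using rho by (simp add: fun_eq_iff)
    show "g t \<in> cfg_space 9" for t using cf rc unfolding g_def cfg_space_def by simp
    show "\<forall>l\<in>L. g t l = 0" for t using gz rz unfolding g_def by simp
    show "\<forall>l\<in>Ls L. lin_dep_family (g t) l" for t using LsL by simp
  qed
qed

lemma decomp:
  assumes d: "det3 c a b = 0" and c: "c \<noteq> 0"
  shows "\<exists>h x y x' y'. a = x *s c + y *s h \<and> b = x' *s c + y' *s h"
proof -
  obtain X Y Z where XYZ: "X \<noteq> 0 \<or> Y \<noteq> 0 \<or> Z \<noteq> 0" "X *s c + Y *s a + Z *s b = 0"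
    using det0_dep[OF d] by blast
  have e: "X * c$r + Y * a$r + Z * b$r = 0" for r
    using XYZ(2) by (simp add: vec_eq_iff)
  show ?thesis
  proof (cases "Z = 0")
    case False
    have "b$r = (- X / Z) * c$r + (- Y / Z) * a$r" for r
    proof -
      have h: "Z * b$r = - X * c$r - Y * a$r" using e[of r] by algebra
      have "b$r = (Z * b$r) / Z" using False by simp
      also have "\<dots> = (- X * c$r - Y * a$r) / Z" using h by simp
      also have "\<dots> = (- X / Z) * c$r + (- Y / Z) * a$r" by (simp add: diff_divide_distrib)
      finally show ?thesis .
    qed
    then have "b = (- X / Z) *s c + (- Y / Z) *s a" by (simp add: vec_eq_iff)
    moreover have "a = 0 *s c + 1 *s a" by simp
    ultimately show ?thesis by blast
  next
    case Z: True
    show ?thesis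
    proof (cases "Y = 0")
      case False
      have "a$r = (- X / Y) * c$r" for r
      proof -
        have h: "Y * a$r = - X * c$r" using e[of r] Z by algebra
        have "a$r = (Y * a$r) / Y" using False by simp
        also have "\<dots> = (- X * c$r) / Y" using h by simp
        finally show ?thesis by simp
      qed
      then have "a = (- X / Y) *s c + 0 *s b" by (simp add: vec_eq_iff)
      moreover have "b = 0 *s c + 1 *s b" by simp
      ultimately show ?thesis by blast
    next
      case True
      then have "X \<noteq> 0" using XYZ(1) Z by simp
      then have "c = 0" using e Z True by (simp add: vec_eq_iff)
      then show ?thesis using c by simp
    qed
  qed
qed

lemma det_span: "det3 c (x *s c + y *s h) (x' *s c + y' *s h) = 0"
  unfolding det3_def by (simp; algebra)




definition vE :: "complex^3" where "vE = vector [0,0,1]"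
definition vA1 :: "complex^3" where "vA1 = vector [-2,-2,-2]"
definition vA2 :: "complex^3" where "vA2 = vector [-2,-1,-2]"
definition vA3 :: "complex^3" where "vA3 = vector [-2,0,1]"

definition W7 :: "nat \<Rightarrow> complex^3" where
  "W7 p = (if p = 0 then vE else if p = 1 then vA1 else if p = 2 then vA1 + vE
     else if p = 3 then vA2 else if p = 4 then vA2 + vE else if p = 5 then vA3 else vA3 + vE)"

definition RL7 :: "nat set set" where "RL7 = {{0,1,2},{0,3,4},{0,5,6}}"

lemma less7: "s < (7::nat) \<Longrightarrow> s = 0 \<or> s = 1 \<or> s = 2 \<or> s = 3 \<or> s = 4 \<or> s = 5 \<or> s = 6" by arith

lemma W7_sorted: assumes "p < q" "q < s" "s < 7" shows "det3 (W7 p) (W7 q) (W7 s) \<noteq> 0 \<or> {p,q,s} \<in> RL7"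
proof -
  have "p < 7" "q < 7" using assms by auto
  then show ?thesis using less7[OF \<open>p < 7\<close>] less7[OF \<open>q < 7\<close>] less7[OF \<open>s < 7\<close>] assms
    by (elim disjE) (simp_all add: W7_def RL7_def det3_def vE_def vA1_def vA2_def vA3_def)
qed

definition W6 :: "nat \<Rightarrow> complex^3" where
  "W6 p = (if p = 0 then vector [0,0,1] else if p = 1 then vector [0,1,0] else if p = 2 then vector [1,0,0]
     else if p = 3 then vector [1,1,2] else if p = 4 then vector [1,2,1] else vector [2,1,1])"

lemma less6: "s < (6::nat) \<Longrightarrow> s = 0 \<or> s = 1 \<or> s = 2 \<or> s = 3 \<or> s = 4 \<or> s = 5" by arith

lemma W6_sorted: assumes "p < q" "q < s" "s < 6" shows "det3 (W6 p) (W6 q) (W6 s) \<noteq> 0 \<or> {p,q,s} \<in> {}"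
proof -
  have "p < 6" "q < 6" using assms by auto
  then show ?thesis using less6[OF \<open>p < 6\<close>] less6[OF \<open>q < 6\<close>] less6[OF \<open>s < 6\<close>] assms
    by (elim disjE) (simp_all add: W6_def det3_def)
qed




lemma det3_perm:
  "det3 v u w = - det3 u v w" "det3 u w v = - det3 u v w" "det3 w v u = - det3 u v w"
  "det3 v w u = det3 u v w" "det3 w u v = det3 u v w"
  unfolding det3_def by (simp_all add: algebra_simps)

lemma sym_ext:
  fixes p q s m :: nat
  assumes S: "\<And>p q s. p < q \<Longrightarrow> q < s \<Longrightarrow> s < m \<Longrightarrow> det3 (W p) (W q) (W s) \<noteq> 0 \<or> {p,q,s} \<in> RL"
    and m: "p < m" "q < m" "s < m" and d: "p \<noteq> q" "p \<noteq> s" "q \<noteq> s"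
  shows "det3 (W p) (W q) (W s) \<noteq> 0 \<or> {p,q,s} \<in> RL"
proof -
  have "p<q \<and> q<s \<or> p<s \<and> s<q \<or> q<p \<and> p<s \<or> q<s \<and> s<p \<or> s<p \<and> p<q \<or> s<q \<and> q<p"
    using d by arith
  then show ?thesis
  proof (elim disjE conjE)
    assume "p < q" "q < s" then show ?thesis using S m by blast
  next
    assume h: "p < s" "s < q"
    have e: "{p,s,q} = {p,q,s}" by auto
    show ?thesis using S[OF h m(2)] det3_perm(2)[where u="W p" and v="W q" and w="W s"] e by auto
  next
    assume h: "q < p" "p < s"
    have e: "{q,p,s} = {p,q,s}" by auto
    show ?thesis using S[OF h m(3)] det3_perm(1)[where u="W p" and v="W q" and w="W s"] e by auto
  next
    assume h: "q < s" "s < p"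
    have e: "{q,s,p} = {p,q,s}" by auto
    show ?thesis using S[OF h m(1)] det3_perm(4)[where u="W p" and v="W q" and w="W s"] e by auto
  next
    assume h: "s < p" "p < q"
    have e: "{s,p,q} = {p,q,s}" by auto
    show ?thesis using S[OF h m(2)] det3_perm(5)[where u="W p" and v="W q" and w="W s"] e by auto
  next
    assume h: "s < q" "q < p"
    have e: "{s,q,p} = {p,q,s}" by auto
    show ?thesis using S[OF h m(1)] det3_perm(3)[where u="W p" and v="W q" and w="W s"] e by auto
  qed
qed

lemma real_roles:
  fixes m :: nat and r :: "nat \<Rightarrow> nat" and W :: "nat \<Rightarrow> complex^3"
  assumes cN: "6 \<le> card ({1..9} - L)" and cL: "card (Ls L) \<le> 3"
    and cf: "\<gamma> \<in> cfg_space 9" and lz: "\<forall>l\<in>L. \<gamma> l = 0" and ll: "\<forall>l\<in>Ls L. lin_dep_family \<gamma> l"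
    and rho: "\<And>n. n \<in> {1..9} - L \<Longrightarrow> \<gamma> n = W (r n)"
    and rr: "\<And>n. n \<in> {1..9} - L \<Longrightarrow> r n < m"
    and ri: "\<And>n. n \<in> {1..9} - L \<Longrightarrow> rinv (r n) = n"
    and RLok: "\<And>R. R \<in> RL \<Longrightarrow> rinv ` R \<in> Ls L"
    and S: "\<And>p q s. p < q \<Longrightarrow> q < s \<Longrightarrow> s < m \<Longrightarrow> det3 (W p) (W q) (W s) \<noteq> 0 \<or> {p,q,s} \<in> RL"
  shows "\<gamma> \<in> realizations 9 (make_loops M_P L)"
proof (rule real_from_triples[OF cN cL cf lz ll])
  fix x y z assume x: "x \<in> {1..9} - L" and y: "y \<in> {1..9} - L" and z: "z \<in> {1..9} - L"
    and d: "x \<noteq> y" "x \<noteq> z" "y \<noteq> z" and nl: "{x,y,z} \<notin> Ls L"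
  have d': "r x \<noteq> r y" "r x \<noteq> r z" "r y \<noteq> r z" using d ri[OF x] ri[OF y] ri[OF z] by metis+
  have "det3 (W (r x)) (W (r y)) (W (r z)) \<noteq> 0 \<or> {r x, r y, r z} \<in> RL"
    by (rule sym_ext[OF S rr[OF x] rr[OF y] rr[OF z] d'])
  moreover have "{r x, r y, r z} \<notin> RL"
  proof
    assume "{r x, r y, r z} \<in> RL"
    then have "rinv ` {r x, r y, r z} \<in> Ls L" by (rule RLok)
    then have "{x,y,z} \<in> Ls L" using ri[OF x] ri[OF y] ri[OF z] by simp
    then show False using nl by simp
  qed
  ultimately show "det3 (\<gamma> x) (\<gamma> y) (\<gamma> z) \<noteq> 0" using rho[OF x] rho[OF y] rho[OF z] by simp
qed




lemma Vc_facts: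
  assumes gV: "\<gamma> \<in> V_circuit 9 (make_loops M_P L)" and L: "L \<subseteq> {1..9}"
  shows "\<gamma> \<in> cfg_space 9" "\<forall>l\<in>L. \<gamma> l = 0" "\<forall>l\<in>Ls L. lin_dep_family \<gamma> l"
proof -
  have Vd: "\<And>S. S \<subseteq> {1..9} \<Longrightarrow> dependent_in (make_loops M_P L) S \<Longrightarrow> lin_dep_family \<gamma> S"
    using gV unfolding V_circuit_def by blast
  show "\<gamma> \<in> cfg_space 9" using gV unfolding V_circuit_def by blast
  show "\<forall>l\<in>L. \<gamma> l = 0"
  proof
    fix l assume l: "l \<in> L"
    have S: "{l} \<subseteq> {1..9}" using l L by auto
    have "dependent_in (make_loops M_P L) {l}" using dep_desc[OF S] l by simp
    then have "lin_dep_family \<gamma> {l}" using Vd[OF S] by simp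
    then show "\<gamma> l = 0" by (rule lin_dep_single)
  qed
  show "\<forall>l\<in>Ls L. lin_dep_family \<gamma> l"
  proof
    fix l assume l: "l \<in> Ls L"
    have S: "l \<subseteq> {1..9}" using l pappus_sub unfolding Ls_def by auto
    have "dependent_in (make_loops M_P L) l" using dep_desc[OF S] l by auto
    then show "lin_dep_family \<gamma> l" using Vd[OF S] by simp
  qed
qed

lemma Fmain:
  assumes L: "L \<subseteq> {1..9}" and N: "{1..9} - L = {k,a1,b1,a2,b2,a3,b3}"
    and dist: "distinct [k,a1,b1,a2,b2,a3,b3]"
    and LsL: "Ls L = {{k,a1,b1},{k,a2,b2},{k,a3,b3}}"
    and gV: "\<gamma> \<in> V_circuit 9 (make_loops M_P L)" and gk: "\<gamma> k \<noteq> 0"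
  shows "\<gamma> \<in> V_matroid 9 (make_loops M_P L)"
proof -
  note VF = Vc_facts[OF gV L]
  have d: "k \<noteq> a1" "k \<noteq> b1" "k \<noteq> a2" "k \<noteq> b2" "k \<noteq> a3" "k \<noteq> b3"
    "a1 \<noteq> b1" "a1 \<noteq> a2" "a1 \<noteq> b2" "a1 \<noteq> a3" "a1 \<noteq> b3"
    "b1 \<noteq> a2" "b1 \<noteq> b2" "b1 \<noteq> a3" "b1 \<noteq> b3"
    "a2 \<noteq> b2" "a2 \<noteq> a3" "a2 \<noteq> b3" "b2 \<noteq> a3" "b2 \<noteq> b3" "a3 \<noteq> b3"
    using dist by auto
  note d' = d[THEN not_sym]
  have lin: "lin_dep_family \<gamma> {k,a1,b1}" "lin_dep_family \<gamma> {k,a2,b2}" "lin_dep_family \<gamma> {k,a3,b3}"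
    using VF(3) LsL by auto
  have "det3 (\<gamma> k) (\<gamma> a1) (\<gamma> b1) = 0" using lin(1) lin_dep3[of k a1 b1 \<gamma>] d by simp
  then obtain h1 x1 y1 x1' y1' where D1: "\<gamma> a1 = x1 *s \<gamma> k + y1 *s h1" "\<gamma> b1 = x1' *s \<gamma> k + y1' *s h1"
    using decomp[OF _ gk] by blast
  have "det3 (\<gamma> k) (\<gamma> a2) (\<gamma> b2) = 0" using lin(2) lin_dep3[of k a2 b2 \<gamma>] d by simp
  then obtain h2 x2 y2 x2' y2' where D2: "\<gamma> a2 = x2 *s \<gamma> k + y2 *s h2" "\<gamma> b2 = x2' *s \<gamma> k + y2' *s h2"
    using decomp[OF _ gk] by blast
  have "det3 (\<gamma> k) (\<gamma> a3) (\<gamma> b3) = 0" using lin(3) lin_dep3[of k a3 b3 \<gamma>] d by simp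
  then obtain h3 x3 y3 x3' y3' where D3: "\<gamma> a3 = x3 *s \<gamma> k + y3 *s h3" "\<gamma> b3 = x3' *s \<gamma> k + y3' *s h3"
    using decomp[OF _ gk] by blast
  define C where "C t = (1 - t) *s \<gamma> k + t *s vE" for t
  define H1 where "H1 t = (1 - t) *s h1 + t *s vA1" for t
  define H2 where "H2 t = (1 - t) *s h2 + t *s vA2" for t
  define H3 where "H3 t = (1 - t) *s h3 + t *s vA3" for t
  define g where "g t n = (if n = k then C t
     else if n = a1 then ((1 - t) * x1) *s C t + ((1 - t) * y1 + t) *s H1 t
     else if n = b1 then ((1 - t) * x1' + t) *s C t + ((1 - t) * y1' + t) *s H1 t
     else if n = a2 then ((1 - t) * x2) *s C t + ((1 - t) * y2 + t) *s H2 t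
     else if n = b2 then ((1 - t) * x2' + t) *s C t + ((1 - t) * y2' + t) *s H2 t
     else if n = a3 then ((1 - t) * x3) *s C t + ((1 - t) * y3 + t) *s H3 t
     else if n = b3 then ((1 - t) * x3' + t) *s C t + ((1 - t) * y3' + t) *s H3 t
     else 0)" for t n
  have gk': "g t k = C t" for t by (simp add: g_def)
  have ga1: "g t a1 = ((1 - t) * x1) *s C t + ((1 - t) * y1 + t) *s H1 t" for t using d by (simp add: g_def)
  have gb1: "g t b1 = ((1 - t) * x1' + t) *s C t + ((1 - t) * y1' + t) *s H1 t" for t using d by (simp add: g_def)
  have ga2: "g t a2 = ((1 - t) * x2) *s C t + ((1 - t) * y2 + t) *s H2 t" for t using d by (simp add: g_def)
  have gb2: "g t b2 = ((1 - t) * x2' + t) *s C t + ((1 - t) * y2' + t) *s H2 t" for t using d by (simp add: g_def)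
  have ga3: "g t a3 = ((1 - t) * x3) *s C t + ((1 - t) * y3 + t) *s H3 t" for t using d by (simp add: g_def)
  have gb3: "g t b3 = ((1 - t) * x3' + t) *s C t + ((1 - t) * y3' + t) *s H3 t" for t using d by (simp add: g_def)
  have gout: "g t n = 0" if "n \<notin> {1..9} - L" for t n
  proof -
    have "n \<notin> {k,a1,b1,a2,b2,a3,b3}" using that unfolding N by simp
    then show ?thesis by (simp add: g_def)
  qed
  have cN: "card ({1..9} - L) = 7" unfolding N using dist distinct_card[of "[k,a1,b1,a2,b2,a3,b3]"] by simp
  have cL: "card (Ls L) \<le> 3" unfolding LsL by (simp add: card_insert_le_m1)
  have gl: "\<forall>l\<in>Ls L. lin_dep_family (g t) l" for t
  proof -
    have "det3 (g t k) (g t a1) (g t b1) = 0" unfolding gk' ga1 gb1 by (rule det_span)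
    then have "lin_dep_family (g t) {k,a1,b1}" using lin_dep3[of k a1 b1 "g t"] d by simp
    moreover have "det3 (g t k) (g t a2) (g t b2) = 0" unfolding gk' ga2 gb2 by (rule det_span)
    then have "lin_dep_family (g t) {k,a2,b2}" using lin_dep3[of k a2 b2 "g t"] d by simp
    moreover have "det3 (g t k) (g t a3) (g t b3) = 0" unfolding gk' ga3 gb3 by (rule det_span)
    then have "lin_dep_family (g t) {k,a3,b3}" using lin_dep3[of k a3 b3 "g t"] d by simp
    ultimately show ?thesis unfolding LsL by blast
  qed
  have gc: "g t \<in> cfg_space 9" for t unfolding cfg_space_def using gout by auto
  have gz: "\<forall>l\<in>L. g t l = 0" for t using gout by auto
  show ?thesis
  proof (rule density[where g=g, OF L _ cL _ _ _ gc gz gl])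
    show "6 \<le> card ({1..9} - L)" using cN by simp
    show "\<forall>n r. pc (\<lambda>t. g t n $ r)"
    proof (intro allI)
      fix n r
      have "pcv (\<lambda>t. g t n)" unfolding g_def C_def H1_def H2_def H3_def
        by (intro pcv_if pcv_add pcv_smult pcv_const pc_add pc_mult pc_sub pc_const pc_id)
      then show "pc (\<lambda>t. g t n $ r)" unfolding pcv_def by blast
    qed
    show "g 0 = \<gamma>"
    proof
      fix n
      show "g 0 n = \<gamma> n"
      proof (cases "n \<in> {1..9} - L")
        case True
        have "n = k \<or> n = a1 \<or> n = b1 \<or> n = a2 \<or> n = b2 \<or> n = a3 \<or> n = b3" using True unfolding N by simp
        then show ?thesis
          by (elim disjE) (simp_all add: gk' ga1 gb1 ga2 gb2 ga3 gb3 C_def H1_def H2_def H3_def D1 D2 D3)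
      next
        case False
        then have "\<gamma> n = 0" using VF(1,2) unfolding cfg_space_def by auto
        then show ?thesis using gout[OF False] by simp
      qed
    qed
    define r where "r n = (if n = k then 0 else if n = a1 then 1 else if n = b1 then 2 else if n = a2 then 3
      else if n = b2 then 4 else if n = a3 then 5 else (6::nat))" for n
    define rinv where "rinv p = (if p = 0 then k else if p = 1 then a1 else if p = 2 then b1 else if p = 3 then a2
      else if p = 4 then b2 else if p = 5 then a3 else b3)" for p :: nat
    show "g 1 \<in> realizations 9 (make_loops M_P L)"
    proof (rule real_roles[where W=W7 and r=r and m=7 and rinv=rinv and RL=RL7, OF _ cL gc[of 1] gz[of 1] gl[of 1]])
      show "6 \<le> card ({1..9} - L)" using cN by simp
      fix n assume n: "n \<in> {1..9} - L"
      have disj: "n = k \<or> n = a1 \<or> n = b1 \<or> n = a2 \<or> n = b2 \<or> n = a3 \<or> n = b3" using n unfolding N by simp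
      then show "g 1 n = W7 (r n)"
        by (elim disjE) (simp_all add: gk' ga1 gb1 ga2 gb2 ga3 gb3 C_def H1_def H2_def H3_def r_def W7_def d d' add.commute)
      show "r n < 7" by (simp add: r_def)
      from disj show "rinv (r n) = n" 
        by (elim disjE) (simp_all add: r_def rinv_def d d')
    next
      fix R assume "R \<in> RL7"
      then have "R = {0,1,2} \<or> R = {0,3,4} \<or> R = {0,5,6}" by (simp add: RL7_def)
      then show "rinv ` R \<in> Ls L" by (elim disjE) (simp_all add: rinv_def LsL insert_commute)
    next
      fix p q s :: nat assume "p < q" "q < s" "s < 7"
      then show "det3 (W7 p) (W7 q) (W7 s) \<noteq> 0 \<or> {p,q,s} \<in> RL7" by (rule W7_sorted)
    qed
  qed
qed




lemma Fprime_full: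
  assumes L: "L \<subseteq> {1..9}" and N: "{1..9} - L = {n0,n1,n2,n3,n4,n5}"
    and dist: "distinct [n0,n1,n2,n3,n4,n5]" and LsL: "Ls L = {}"
    and cf: "\<gamma> \<in> cfg_space 9" and gz: "\<forall>l\<in>L. \<gamma> l = 0"
  shows "\<gamma> \<in> V_matroid 9 (make_loops M_P L)"
proof -
  have d: "n0 \<noteq> n1" "n0 \<noteq> n2" "n0 \<noteq> n3" "n0 \<noteq> n4" "n0 \<noteq> n5"
    "n1 \<noteq> n2" "n1 \<noteq> n3" "n1 \<noteq> n4" "n1 \<noteq> n5" "n2 \<noteq> n3" "n2 \<noteq> n4" "n2 \<noteq> n5"
    "n3 \<noteq> n4" "n3 \<noteq> n5" "n4 \<noteq> n5" using dist by auto
  note d' = d[THEN not_sym]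
  have cN: "card ({1..9} - L) = 6" unfolding N using dist distinct_card[of "[n0,n1,n2,n3,n4,n5]"] by simp
  define r where "r n = (if n = n0 then 0 else if n = n1 then 1 else if n = n2 then 2 else if n = n3 then 3
      else if n = n4 then 4 else (5::nat))" for n
  define rinv where "rinv p = (if p = 0 then n0 else if p = 1 then n1 else if p = 2 then n2 else if p = 3 then n3
      else if p = 4 then n4 else n5)" for p :: nat
  define \<rho> where "\<rho> n = (if n \<in> {n0,n1,n2,n3,n4,n5} then W6 (r n) else 0)" for n
  have rout: "\<rho> n = 0" if "n \<notin> {1..9} - L" for n
  proof -
    have "n \<notin> {n0,n1,n2,n3,n4,n5}" using that unfolding N by simp
    then show ?thesis by (simp add: \<rho>_def)
  qed
  have rc: "\<rho> \<in> cfg_space 9" unfolding cfg_space_def using rout by auto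
  have rz: "\<forall>l\<in>L. \<rho> l = 0" using rout by auto
  have "\<rho> \<in> realizations 9 (make_loops M_P L)"
  proof (rule real_roles[where W=W6 and r=r and m=6 and rinv=rinv and RL="{}", OF _ _ rc rz])
    show "6 \<le> card ({1..9} - L)" using cN by simp
    show "card (Ls L) \<le> 3" using LsL by simp
    show "\<forall>l\<in>Ls L. lin_dep_family \<rho> l" using LsL by simp
    fix n assume n: "n \<in> {1..9} - L"
    then have nn: "n \<in> {n0,n1,n2,n3,n4,n5}" unfolding N .
    then show "\<rho> n = W6 (r n)" by (simp add: \<rho>_def)
    have disj: "n = n0 \<or> n = n1 \<or> n = n2 \<or> n = n3 \<or> n = n4 \<or> n = n5" using nn by simp
    show "r n < 6" by (simp add: r_def)
    from disj show "rinv (r n) = n"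
      by (elim disjE) (simp_all add: r_def rinv_def d d')
  next
    fix R :: "nat set" assume "R \<in> {}" then show "rinv ` R \<in> Ls L" by simp
  next
    fix p q s :: nat assume "p < q" "q < s" "s < 6"
    then show "det3 (W6 p) (W6 q) (W6 s) \<noteq> 0 \<or> {p,q,s} \<in> {}" by (rule W6_sorted)
  qed
  then show ?thesis using Fprime[OF L _ LsL _ cf gz] cN by simp
qed

lemma combine:
  assumes L: "L \<subseteq> {1..9}" and k: "k \<in> {1..9}"
    and Fm: "\<And>\<gamma>. \<gamma> \<in> V_circuit 9 (make_loops M_P L) \<Longrightarrow> \<gamma> k \<noteq> 0 \<Longrightarrow> \<gamma> \<in> V_matroid 9 (make_loops M_P L)"
    and Fp: "\<And>\<gamma>. \<gamma> \<in> cfg_space 9 \<Longrightarrow> \<forall>l\<in>insert k L. \<gamma> l = 0 \<Longrightarrow> \<gamma> \<in> V_matroid 9 (make_loops M_P (insert k L))"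
  shows "V_circuit 9 (make_loops M_P L) = V_matroid 9 (make_loops M_P L) \<union> V_matroid 9 (make_loops M_P (insert k L))"
proof
  show "V_matroid 9 (make_loops M_P L) \<union> V_matroid 9 (make_loops M_P (insert k L)) \<subseteq> V_circuit 9 (make_loops M_P L)"
    using Vsub[of L L] Vsub[of L "insert k L"] L k by auto
  show "V_circuit 9 (make_loops M_P L) \<subseteq> V_matroid 9 (make_loops M_P L) \<union> V_matroid 9 (make_loops M_P (insert k L))"
  proof
    fix \<gamma> assume g: "\<gamma> \<in> V_circuit 9 (make_loops M_P L)"
    note VF = Vc_facts[OF g L]
    show "\<gamma> \<in> V_matroid 9 (make_loops M_P L) \<union> V_matroid 9 (make_loops M_P (insert k L))"
    proof (cases "\<gamma> k = 0")
      case True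
      then have "\<forall>l\<in>insert k L. \<gamma> l = 0" using VF(2) by simp
      then show ?thesis using Fp[OF VF(1)] by simp
    next
      case False
      then show ?thesis using Fm[OF g] by simp
    qed
  qed
qed

lemma filter_insert': "{l \<in> insert a A. P l} = (if P a then insert a {l \<in> A. P l} else {l \<in> A. P l})"
  by auto

lemma nine: "{1..9::nat} = {1,2,3,4,5,6,7,8,9}" by auto

lemma case_4_9:
  "V_circuit 9 (make_loops M_P {4,9}) = V_matroid 9 (make_loops M_P {4,9}) \<union> V_matroid 9 (make_loops M_P (insert 1 {4,9}))"
proof (rule combine)
  show "{4,9} \<subseteq> {1..9::nat}" by auto
  show "(1::nat) \<in> {1..9}" by auto
  fix \<gamma> assume "\<gamma> \<in> V_circuit 9 (make_loops M_P {4,9})" "\<gamma> 1 \<noteq> 0"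
  then show "\<gamma> \<in> V_matroid 9 (make_loops M_P {4,9})"
  proof (rule Fmain[rotated 4])
    show "{4,9} \<subseteq> {1..9::nat}" by auto
    show "{1..9::nat} - {4,9} = {1,2,3,6,8,5,7}" unfolding nine by auto
    show "distinct [1::nat,2,3,6,8,5,7]" by simp
    show "Ls {4,9} = {{1,2,3},{1,6,8},{1,5,7}}"
      unfolding Ls_def pappus_lines_def filter_insert' by (simp add: insert_commute)
  qed
next
  fix \<gamma> :: "nat \<Rightarrow> complex^3" assume "\<gamma> \<in> cfg_space 9" "\<forall>l\<in>insert 1 {4,9}. \<gamma> l = 0"
  then show "\<gamma> \<in> V_matroid 9 (make_loops M_P (insert 1 {4,9}))"
  proof (rule Fprime_full[rotated 4])
    show "insert 1 {4,9} \<subseteq> {1..9::nat}" by auto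
    show "{1..9::nat} - insert 1 {4,9} = {2,3,5,6,7,8}" unfolding nine by auto
    show "distinct [2::nat,3,5,6,7,8]" by simp
    show "Ls (insert 1 {4,9}) = {}"
      unfolding Ls_def pappus_lines_def filter_insert' by simp
  qed
qed

lemma case_1_9:
  "V_circuit 9 (make_loops M_P {1,9}) = V_matroid 9 (make_loops M_P {1,9}) \<union> V_matroid 9 (make_loops M_P (insert 4 {1,9}))"
proof (rule combine)
  show "{1,9} \<subseteq> {1..9::nat}" by auto
  show "(4::nat) \<in> {1..9}" by auto
  fix \<gamma> assume "\<gamma> \<in> V_circuit 9 (make_loops M_P {1,9})" "\<gamma> 4 \<noteq> 0"
  then show "\<gamma> \<in> V_matroid 9 (make_loops M_P {1,9})"
  proof (rule Fmain[rotated 4])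
    show "{1,9} \<subseteq> {1..9::nat}" by auto
    show "{1..9::nat} - {1,9} = {4,2,7,3,8,5,6}" unfolding nine by auto
    show "distinct [4::nat,2,7,3,8,5,6]" by simp
    show "Ls {1,9} = {{4,2,7},{4,3,8},{4,5,6}}"
      unfolding Ls_def pappus_lines_def filter_insert' by (simp add: insert_commute)
  qed
next
  fix \<gamma> :: "nat \<Rightarrow> complex^3" assume "\<gamma> \<in> cfg_space 9" "\<forall>l\<in>insert 4 {1,9}. \<gamma> l = 0"
  then show "\<gamma> \<in> V_matroid 9 (make_loops M_P (insert 4 {1,9}))"
  proof (rule Fprime_full[rotated 4])
    show "insert 4 {1,9} \<subseteq> {1..9::nat}" by auto
    show "{1..9::nat} - insert 4 {1,9} = {2,3,5,6,7,8}" unfolding nine by auto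
    show "distinct [2::nat,3,5,6,7,8]" by simp
    show "Ls (insert 4 {1,9}) = {}"
      unfolding Ls_def pappus_lines_def filter_insert' by simp
  qed
qed

lemma case_1_4:
  "V_circuit 9 (make_loops M_P {1,4}) = V_matroid 9 (make_loops M_P {1,4}) \<union> V_matroid 9 (make_loops M_P (insert 9 {1,4}))"
proof (rule combine)
  show "{1,4} \<subseteq> {1..9::nat}" by auto
  show "(9::nat) \<in> {1..9}" by auto
  fix \<gamma> assume "\<gamma> \<in> V_circuit 9 (make_loops M_P {1,4})" "\<gamma> 9 \<noteq> 0"
  then show "\<gamma> \<in> V_matroid 9 (make_loops M_P {1,4})"
  proof (rule Fmain[rotated 4])
    show "{1,4} \<subseteq> {1..9::nat}" by auto
    show "{1..9::nat} - {1,4} = {9,7,8,2,6,3,5}" unfolding nine by auto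
    show "distinct [9::nat,7,8,2,6,3,5]" by simp
    show "Ls {1,4} = {{9,7,8},{9,2,6},{9,3,5}}"
      unfolding Ls_def pappus_lines_def filter_insert' by (simp add: insert_commute)
  qed
next
  fix \<gamma> :: "nat \<Rightarrow> complex^3" assume "\<gamma> \<in> cfg_space 9" "\<forall>l\<in>insert 9 {1,4}. \<gamma> l = 0"
  then show "\<gamma> \<in> V_matroid 9 (make_loops M_P (insert 9 {1,4}))"
  proof (rule Fprime_full[rotated 4])
    show "insert 9 {1,4} \<subseteq> {1..9::nat}" by auto
    show "{1..9::nat} - insert 9 {1,4} = {2,3,5,6,7,8}" unfolding nine by auto
    show "distinct [2::nat,3,5,6,7,8]" by simp
    show "Ls (insert 9 {1,4}) = {}"
      unfolding Ls_def pappus_lines_def filter_insert' by simp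
  qed
qed

lemma case_5_8:
  "V_circuit 9 (make_loops M_P {5,8}) = V_matroid 9 (make_loops M_P {5,8}) \<union> V_matroid 9 (make_loops M_P (insert 2 {5,8}))"
proof (rule combine)
  show "{5,8} \<subseteq> {1..9::nat}" by auto
  show "(2::nat) \<in> {1..9}" by auto
  fix \<gamma> assume "\<gamma> \<in> V_circuit 9 (make_loops M_P {5,8})" "\<gamma> 2 \<noteq> 0"
  then show "\<gamma> \<in> V_matroid 9 (make_loops M_P {5,8})"
  proof (rule Fmain[rotated 4])
    show "{5,8} \<subseteq> {1..9::nat}" by auto
    show "{1..9::nat} - {5,8} = {2,1,3,6,9,4,7}" unfolding nine by auto
    show "distinct [2::nat,1,3,6,9,4,7]" by simp
    show "Ls {5,8} = {{2,1,3},{2,6,9},{2,4,7}}"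
      unfolding Ls_def pappus_lines_def filter_insert' by (simp add: insert_commute)
  qed
next
  fix \<gamma> :: "nat \<Rightarrow> complex^3" assume "\<gamma> \<in> cfg_space 9" "\<forall>l\<in>insert 2 {5,8}. \<gamma> l = 0"
  then show "\<gamma> \<in> V_matroid 9 (make_loops M_P (insert 2 {5,8}))"
  proof (rule Fprime_full[rotated 4])
    show "insert 2 {5,8} \<subseteq> {1..9::nat}" by auto
    show "{1..9::nat} - insert 2 {5,8} = {1,3,4,6,7,9}" unfolding nine by auto
    show "distinct [1::nat,3,4,6,7,9]" by simp
    show "Ls (insert 2 {5,8}) = {}"
      unfolding Ls_def pappus_lines_def filter_insert' by simp
  qed
qed

lemma case_2_8:
  "V_circuit 9 (make_loops M_P {2,8}) = V_matroid 9 (make_loops M_P {2,8}) \<union> V_matroid 9 (make_loops M_P (insert 5 {2,8}))"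
proof (rule combine)
  show "{2,8} \<subseteq> {1..9::nat}" by auto
  show "(5::nat) \<in> {1..9}" by auto
  fix \<gamma> assume "\<gamma> \<in> V_circuit 9 (make_loops M_P {2,8})" "\<gamma> 5 \<noteq> 0"
  then show "\<gamma> \<in> V_matroid 9 (make_loops M_P {2,8})"
  proof (rule Fmain[rotated 4])
    show "{2,8} \<subseteq> {1..9::nat}" by auto
    show "{1..9::nat} - {2,8} = {5,3,9,1,7,4,6}" unfolding nine by auto
    show "distinct [5::nat,3,9,1,7,4,6]" by simp
    show "Ls {2,8} = {{5,3,9},{5,1,7},{5,4,6}}"
      unfolding Ls_def pappus_lines_def filter_insert' by (simp add: insert_commute)
  qed
next
  fix \<gamma> :: "nat \<Rightarrow> complex^3" assume "\<gamma> \<in> cfg_space 9" "\<forall>l\<in>insert 5 {2,8}. \<gamma> l = 0"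
  then show "\<gamma> \<in> V_matroid 9 (make_loops M_P (insert 5 {2,8}))"
  proof (rule Fprime_full[rotated 4])
    show "insert 5 {2,8} \<subseteq> {1..9::nat}" by auto
    show "{1..9::nat} - insert 5 {2,8} = {1,3,4,6,7,9}" unfolding nine by auto
    show "distinct [1::nat,3,4,6,7,9]" by simp
    show "Ls (insert 5 {2,8}) = {}"
      unfolding Ls_def pappus_lines_def filter_insert' by simp
  qed
qed

lemma case_2_5:
  "V_circuit 9 (make_loops M_P {2,5}) = V_matroid 9 (make_loops M_P {2,5}) \<union> V_matroid 9 (make_loops M_P (insert 8 {2,5}))"
proof (rule combine)
  show "{2,5} \<subseteq> {1..9::nat}" by auto
  show "(8::nat) \<in> {1..9}" by auto
  fix \<gamma> assume "\<gamma> \<in> V_circuit 9 (make_loops M_P {2,5})" "\<gamma> 8 \<noteq> 0"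
  then show "\<gamma> \<in> V_matroid 9 (make_loops M_P {2,5})"
  proof (rule Fmain[rotated 4])
    show "{2,5} \<subseteq> {1..9::nat}" by auto
    show "{1..9::nat} - {2,5} = {8,1,6,7,9,3,4}" unfolding nine by auto
    show "distinct [8::nat,1,6,7,9,3,4]" by simp
    show "Ls {2,5} = {{8,1,6},{8,7,9},{8,3,4}}"
      unfolding Ls_def pappus_lines_def filter_insert' by (simp add: insert_commute)
  qed
next
  fix \<gamma> :: "nat \<Rightarrow> complex^3" assume "\<gamma> \<in> cfg_space 9" "\<forall>l\<in>insert 8 {2,5}. \<gamma> l = 0"
  then show "\<gamma> \<in> V_matroid 9 (make_loops M_P (insert 8 {2,5}))"
  proof (rule Fprime_full[rotated 4])
    show "insert 8 {2,5} \<subseteq> {1..9::nat}" by auto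
    show "{1..9::nat} - insert 8 {2,5} = {1,3,4,6,7,9}" unfolding nine by auto
    show "distinct [1::nat,3,4,6,7,9]" by simp
    show "Ls (insert 8 {2,5}) = {}"
      unfolding Ls_def pappus_lines_def filter_insert' by simp
  qed
qed

lemma case_6_7:
  "V_circuit 9 (make_loops M_P {6,7}) = V_matroid 9 (make_loops M_P {6,7}) \<union> V_matroid 9 (make_loops M_P (insert 3 {6,7}))"
proof (rule combine)
  show "{6,7} \<subseteq> {1..9::nat}" by auto
  show "(3::nat) \<in> {1..9}" by auto
  fix \<gamma> assume "\<gamma> \<in> V_circuit 9 (make_loops M_P {6,7})" "\<gamma> 3 \<noteq> 0"
  then show "\<gamma> \<in> V_matroid 9 (make_loops M_P {6,7})"
  proof (rule Fmain[rotated 4])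
    show "{6,7} \<subseteq> {1..9::nat}" by auto
    show "{1..9::nat} - {6,7} = {3,1,2,5,9,4,8}" unfolding nine by auto
    show "distinct [3::nat,1,2,5,9,4,8]" by simp
    show "Ls {6,7} = {{3,1,2},{3,5,9},{3,4,8}}"
      unfolding Ls_def pappus_lines_def filter_insert' by (simp add: insert_commute)
  qed
next
  fix \<gamma> :: "nat \<Rightarrow> complex^3" assume "\<gamma> \<in> cfg_space 9" "\<forall>l\<in>insert 3 {6,7}. \<gamma> l = 0"
  then show "\<gamma> \<in> V_matroid 9 (make_loops M_P (insert 3 {6,7}))"
  proof (rule Fprime_full[rotated 4])
    show "insert 3 {6,7} \<subseteq> {1..9::nat}" by auto
    show "{1..9::nat} - insert 3 {6,7} = {1,2,4,5,8,9}" unfolding nine by auto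
    show "distinct [1::nat,2,4,5,8,9]" by simp
    show "Ls (insert 3 {6,7}) = {}"
      unfolding Ls_def pappus_lines_def filter_insert' by simp
  qed
qed

lemma case_3_7:
  "V_circuit 9 (make_loops M_P {3,7}) = V_matroid 9 (make_loops M_P {3,7}) \<union> V_matroid 9 (make_loops M_P (insert 6 {3,7}))"
proof (rule combine)
  show "{3,7} \<subseteq> {1..9::nat}" by auto
  show "(6::nat) \<in> {1..9}" by auto
  fix \<gamma> assume "\<gamma> \<in> V_circuit 9 (make_loops M_P {3,7})" "\<gamma> 6 \<noteq> 0"
  then show "\<gamma> \<in> V_matroid 9 (make_loops M_P {3,7})"
  proof (rule Fmain[rotated 4])
    show "{3,7} \<subseteq> {1..9::nat}" by auto
    show "{1..9::nat} - {3,7} = {6,1,8,2,9,4,5}" unfolding nine by auto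
    show "distinct [6::nat,1,8,2,9,4,5]" by simp
    show "Ls {3,7} = {{6,1,8},{6,2,9},{6,4,5}}"
      unfolding Ls_def pappus_lines_def filter_insert' by (simp add: insert_commute)
  qed
next
  fix \<gamma> :: "nat \<Rightarrow> complex^3" assume "\<gamma> \<in> cfg_space 9" "\<forall>l\<in>insert 6 {3,7}. \<gamma> l = 0"
  then show "\<gamma> \<in> V_matroid 9 (make_loops M_P (insert 6 {3,7}))"
  proof (rule Fprime_full[rotated 4])
    show "insert 6 {3,7} \<subseteq> {1..9::nat}" by auto
    show "{1..9::nat} - insert 6 {3,7} = {1,2,4,5,8,9}" unfolding nine by auto
    show "distinct [1::nat,2,4,5,8,9]" by simp
    show "Ls (insert 6 {3,7}) = {}"
      unfolding Ls_def pappus_lines_def filter_insert' by simp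
  qed
qed

lemma case_3_6:
  "V_circuit 9 (make_loops M_P {3,6}) = V_matroid 9 (make_loops M_P {3,6}) \<union> V_matroid 9 (make_loops M_P (insert 7 {3,6}))"
proof (rule combine)
  show "{3,6} \<subseteq> {1..9::nat}" by auto
  show "(7::nat) \<in> {1..9}" by auto
  fix \<gamma> assume "\<gamma> \<in> V_circuit 9 (make_loops M_P {3,6})" "\<gamma> 7 \<noteq> 0"
  then show "\<gamma> \<in> V_matroid 9 (make_loops M_P {3,6})"
  proof (rule Fmain[rotated 4])
    show "{3,6} \<subseteq> {1..9::nat}" by auto
    show "{1..9::nat} - {3,6} = {7,8,9,2,4,1,5}" unfolding nine by auto
    show "distinct [7::nat,8,9,2,4,1,5]" by simp
    show "Ls {3,6} = {{7,8,9},{7,2,4},{7,1,5}}"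
      unfolding Ls_def pappus_lines_def filter_insert' by (simp add: insert_commute)
  qed
next
  fix \<gamma> :: "nat \<Rightarrow> complex^3" assume "\<gamma> \<in> cfg_space 9" "\<forall>l\<in>insert 7 {3,6}. \<gamma> l = 0"
  then show "\<gamma> \<in> V_matroid 9 (make_loops M_P (insert 7 {3,6}))"
  proof (rule Fprime_full[rotated 4])
    show "insert 7 {3,6} \<subseteq> {1..9::nat}" by auto
    show "{1..9::nat} - insert 7 {3,6} = {1,2,4,5,8,9}" unfolding nine by auto
    show "distinct [1::nat,2,4,5,8,9]" by simp
    show "Ls (insert 7 {3,6}) = {}"
      unfolding Ls_def pappus_lines_def filter_insert' by simp
  qed
qed




lemma tri_cases:
  fixes i j k a b c :: nat
  assumes e: "{i,j,k} = {a,b,c}" and d: "a \<noteq> b" "a \<noteq> c" "b \<noteq> c" and ij: "i \<noteq> j"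
  shows "(i=a \<and> j=b \<and> k=c) \<or> (i=b \<and> j=a \<and> k=c) \<or> (i=a \<and> j=c \<and> k=b) \<or> (i=c \<and> j=a \<and> k=b) \<or> (i=b \<and> j=c \<and> k=a) \<or> (i=c \<and> j=b \<and> k=a)"
proof -
  have m: "i \<in> {a,b,c}" "j \<in> {a,b,c}" "k \<in> {a,b,c}" "a \<in> {i,j,k}" "b \<in> {i,j,k}" "c \<in> {i,j,k}"
    using e by blast+
  have mi: "i = a \<or> i = b \<or> i = c" using m(1) by simp
  have mj: "j = a \<or> j = b \<or> j = c" using m(2) by simp
  have mk: "k = a \<or> k = b \<or> k = c" using m(3) by simp
  note d' = d[THEN not_sym]
  from mi mj mk show ?thesis
    by (elim disjE) (insert m(4-6) d d' ij, simp_all)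
qed

theorem mainTheorem14:
  fixes i j k :: nat
  assumes "i \<in> {1..9}" and "j \<in> {1..9}" and "i \<noteq> j"
    and "\<not> (\<exists>l\<in>pappus_lines. i \<in> l \<and> j \<in> l)"
    and "{i, j, k} \<in> {{1,4,9}, {2,5,8}, {3,6,7}}"
  shows "V_circuit 9 (make_loops M_P {i, j}) =
         V_matroid 9 (make_loops M_P {i, j}) \<union> V_matroid 9 (make_loops M_P {i, j, k})"
proof -
  have hk: "{i,j,k} = insert k {i,j}" by auto
  have T: "{i,j,k} = {1,4,9} \<or> {i,j,k} = {2,5,8} \<or> {i,j,k} = {3,6,7}" using assms(5) by simp
  then show ?thesis
  proof (elim disjE)
    assume t: "{i,j,k} = {1,4,9}"
    have dd: "(1::nat) \<noteq> 4" "(1::nat) \<noteq> 9" "(4::nat) \<noteq> 9" by simp_all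
    from tri_cases[OF t dd assms(3)] show ?thesis
    proof (elim disjE conjE)
      assume "i = 1" "j = 4" "k = 9"
      have e: "{i,j} = {1,4}" using \<open>i = 1\<close> \<open>j = 4\<close> by auto
      show ?thesis unfolding hk unfolding e \<open>k = 9\<close> by (rule case_1_4)
    next
      assume "i = 4" "j = 1" "k = 9"
      have e: "{i,j} = {1,4}" using \<open>i = 4\<close> \<open>j = 1\<close> by auto
      show ?thesis unfolding hk unfolding e \<open>k = 9\<close> by (rule case_1_4)
    next
      assume "i = 1" "j = 9" "k = 4"
      have e: "{i,j} = {1,9}" using \<open>i = 1\<close> \<open>j = 9\<close> by auto
      show ?thesis unfolding hk unfolding e \<open>k = 4\<close> by (rule case_1_9)
    next
      assume "i = 9" "j = 1" "k = 4"
      have e: "{i,j} = {1,9}" using \<open>i = 9\<close> \<open>j = 1\<close> by auto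
      show ?thesis unfolding hk unfolding e \<open>k = 4\<close> by (rule case_1_9)
    next
      assume "i = 4" "j = 9" "k = 1"
      have e: "{i,j} = {4,9}" using \<open>i = 4\<close> \<open>j = 9\<close> by auto
      show ?thesis unfolding hk unfolding e \<open>k = 1\<close> by (rule case_4_9)
    next
      assume "i = 9" "j = 4" "k = 1"
      have e: "{i,j} = {4,9}" using \<open>i = 9\<close> \<open>j = 4\<close> by auto
      show ?thesis unfolding hk unfolding e \<open>k = 1\<close> by (rule case_4_9)
    qed
  next
    assume t: "{i,j,k} = {2,5,8}"
    have dd: "(2::nat) \<noteq> 5" "(2::nat) \<noteq> 8" "(5::nat) \<noteq> 8" by simp_all
    from tri_cases[OF t dd assms(3)] show ?thesis
    proof (elim disjE conjE)
      assume "i = 2" "j = 5" "k = 8"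
      have e: "{i,j} = {2,5}" using \<open>i = 2\<close> \<open>j = 5\<close> by auto
      show ?thesis unfolding hk unfolding e \<open>k = 8\<close> by (rule case_2_5)
    next
      assume "i = 5" "j = 2" "k = 8"
      have e: "{i,j} = {2,5}" using \<open>i = 5\<close> \<open>j = 2\<close> by auto
      show ?thesis unfolding hk unfolding e \<open>k = 8\<close> by (rule case_2_5)
    next
      assume "i = 2" "j = 8" "k = 5"
      have e: "{i,j} = {2,8}" using \<open>i = 2\<close> \<open>j = 8\<close> by auto
      show ?thesis unfolding hk unfolding e \<open>k = 5\<close> by (rule case_2_8)
    next
      assume "i = 8" "j = 2" "k = 5"
      have e: "{i,j} = {2,8}" using \<open>i = 8\<close> \<open>j = 2\<close> by auto
      show ?thesis unfolding hk unfolding e \<open>k = 5\<close> by (rule case_2_8)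
    next
      assume "i = 5" "j = 8" "k = 2"
      have e: "{i,j} = {5,8}" using \<open>i = 5\<close> \<open>j = 8\<close> by auto
      show ?thesis unfolding hk unfolding e \<open>k = 2\<close> by (rule case_5_8)
    next
      assume "i = 8" "j = 5" "k = 2"
      have e: "{i,j} = {5,8}" using \<open>i = 8\<close> \<open>j = 5\<close> by auto
      show ?thesis unfolding hk unfolding e \<open>k = 2\<close> by (rule case_5_8)
    qed
  next
    assume t: "{i,j,k} = {3,6,7}"
    have dd: "(3::nat) \<noteq> 6" "(3::nat) \<noteq> 7" "(6::nat) \<noteq> 7" by simp_all
    from tri_cases[OF t dd assms(3)] show ?thesis
    proof (elim disjE conjE)
      assume "i = 3" "j = 6" "k = 7"
      have e: "{i,j} = {3,6}" using \<open>i = 3\<close> \<open>j = 6\<close> by auto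
      show ?thesis unfolding hk unfolding e \<open>k = 7\<close> by (rule case_3_6)
    next
      assume "i = 6" "j = 3" "k = 7"
      have e: "{i,j} = {3,6}" using \<open>i = 6\<close> \<open>j = 3\<close> by auto
      show ?thesis unfolding hk unfolding e \<open>k = 7\<close> by (rule case_3_6)
    next
      assume "i = 3" "j = 7" "k = 6"
      have e: "{i,j} = {3,7}" using \<open>i = 3\<close> \<open>j = 7\<close> by auto
      show ?thesis unfolding hk unfolding e \<open>k = 6\<close> by (rule case_3_7)
    next
      assume "i = 7" "j = 3" "k = 6"
      have e: "{i,j} = {3,7}" using \<open>i = 7\<close> \<open>j = 3\<close> by auto
      show ?thesis unfolding hk unfolding e \<open>k = 6\<close> by (rule case_3_7)
    next
      assume "i = 6" "j = 7" "k = 3"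
      have e: "{i,j} = {6,7}" using \<open>i = 6\<close> \<open>j = 7\<close> by auto
      show ?thesis unfolding hk unfolding e \<open>k = 3\<close> by (rule case_6_7)
    next
      assume "i = 7" "j = 6" "k = 3"
      have e: "{i,j} = {6,7}" using \<open>i = 7\<close> \<open>j = 6\<close> by auto
      show ?thesis unfolding hk unfolding e \<open>k = 3\<close> by (rule case_6_7)
    qed
  qed
qed


end
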